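(* Let $0<s_1<s_2$ and for $m\ge1$ let $\mathcal C_N$, $N=4m+1$, be the defect capacitance matrix. Then there exists $N_0$ such that for all such $N\ge N_0$, $\mathcal C_N$ has exactly one eigenvalue $\lambda^{(N)}$ in $\Gamma=\big(\frac2{s_2},\frac2{s_1}\big)$. Moreover, with $$\lambda_*:=\frac12\left(\frac{3}{s_1}+\frac{3}{s_2}-\sqrt{\frac{9}{s_1^2}-\frac{14}{s_1s_2}+\frac{9}{s_2^2}}\right)\in\Gamma,$$ there exist constants $A,B>0$ independent of $N$ such that $|\lambda^{(N)}-\lambda_*|<Ae^{-BN}$ for all such $N\ge N_0$. Consequently, for fixed $v_b,\delta>0$, the leading-order interface frequencies $\omega^{(N)}:=v_b\sqrt{\delta\lambda^{(N)}}$ satisfy $|\omega^{(N)}-\omega_*|<A'e^{-BN}$ for some $A'>0$ independent of $N$, where $\omega_*=v_b\sqrt{\delta\lambda_*}$.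
   Context: Set $\alpha=\frac1{s_1}+\frac1{s_2}$, $\beta_1=-\frac1{s_1}$, $\beta_2=-\frac1{s_2}$, $\eta=\frac2{s_2}$. The defect capacitance matrix $\mathcal C_N$ ($N=4m+1$) is the real symmetric tridiagonal matrix with diagonal entries $(\mathcal C_N)_{11}=(\mathcal C_N)_{NN}=\frac1{s_1}$, $(\mathcal C_N)_{2m+1,2m+1}=\eta$, $(\mathcal C_N)_{ii}=\alpha$ otherwise, and off-diagonal entries $(\mathcal C_N)_{i,i+1}=(\mathcal C_N)_{i+1,i}$ equal to $\beta_1$ ($i$ odd) and $\beta_2$ ($i$ even) for $1\le i\le 2m$, and $\beta_2$ ($i$ odd) and $\beta_1$ ($i$ even) for $2m+1\le i\le 4m$. In the high-contrast model, the subwavelength resonant frequencies of the chain are $v_b\sqrt{\delta\lambda}+O(\delta)$, $\lambda$ ranging over eigenvalues of the capacitance matrix, where $\delta$ is the density contrast and $v_b$ the wave speed in the resonators. *)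

theory Defs
  imports Complex_Main "Jordan_Normal_Form.Char_Poly"
begin

definition cap_entry :: "real \<Rightarrow> real \<Rightarrow> nat \<Rightarrow> nat \<Rightarrow> nat \<Rightarrow> real" where
  "cap_entry s1 s2 m i j =
     (let N = 4*m+1; \<alpha> = 1/s1 + 1/s2; \<beta>1 = -1/s1; \<beta>2 = -1/s2; \<eta> = 2/s2;
          off = (\<lambda>k::nat. if k \<le> 2*m then (if odd k then \<beta>1 else \<beta>2)
                           else (if odd k then \<beta>2 else \<beta>1))
      in if i = j then
           (if i = 1 \<or> i = N then 1/s1 else if i = 2*m+1 then \<eta> else \<alpha>)
         else if j = i + 1 then off i
         else if i = j + 1 then off j
         else 0)"

text \<open>The N x N matrix (0-based indices in the library shifted to 1-based entries).\<close>
definition cap_mat :: "real \<Rightarrow> real \<Rightarrow> nat \<Rightarrow> real mat" where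
  "cap_mat s1 s2 m = mat (4*m+1) (4*m+1) (\<lambda>(i,j). cap_entry s1 s2 m (i+1) (j+1))"

definition lambda_star :: "real \<Rightarrow> real \<Rightarrow> real" where
  "lambda_star s1 s2 = (3/s1 + 3/s2 - sqrt (9/s1^2 - 14/(s1*s2) + 9/s2^2)) / 2"

end

theory Submission
  imports Defs
begin


fun Ch :: "real \<Rightarrow> nat \<Rightarrow> real" where
  "Ch c 0 = 0" | "Ch c (Suc 0) = 1" | "Ch c (Suc (Suc n)) = 2*c*Ch c (Suc n) - Ch c n"

definition nu :: "real \<Rightarrow> real" where "nu c = c + sqrt (c^2 - 1)"

lemma nu_ge1: "1 \<le> c \<Longrightarrow> 1 \<le> nu c"
  unfolding nu_def by (smt (verit) real_sqrt_ge_zero one_le_power)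

lemma nu_inv: assumes "1 \<le> c" shows "1 / nu c = c - sqrt (c^2 - 1)"
proof -
  have s: "(sqrt (c^2-1))^2 = c^2 - 1" using assms by (simp add: one_le_power)
  have "nu c * (c - sqrt (c^2 - 1)) = 1" unfolding nu_def using s by (simp add: algebra_simps power2_eq_square)
  moreover have "nu c \<noteq> 0" using nu_ge1[OF assms] by simp
  ultimately show ?thesis by (simp add: field_simps)
qed

lemma nu_eq: "1 \<le> c \<Longrightarrow> nu c + 1/nu c = 2*c"
  using nu_inv unfolding nu_def by simp

lemma nu_quad: assumes "1 \<le> c" shows "t^2 - 2*c*t + 1 = (t - nu c)*(t - 1/nu c)"
proof -
  have 1: "nu c * (1/nu c) = 1" using nu_ge1[OF assms] by simp
  have g: "\<And>v w. (t - v)*(t - w) = t^2 - t*(v + w) + v * w"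
    by (simp add: algebra_simps power2_eq_square)
  have "(t - nu c)*(t - 1/nu c) = t^2 - t*(nu c + 1/nu c) + nu c * (1/nu c)"
    by (rule g)
  then show ?thesis using nu_eq[OF assms] 1 by simp
qed

lemma nu_mono: assumes "1 \<le> c" "c \<le> d" shows "nu c \<le> nu d"
proof -
  have "c^2 \<le> d^2" using assms by (intro power_mono) auto
  then have "sqrt (c^2 - 1) \<le> sqrt (d^2-1)" by simp
  then show ?thesis unfolding nu_def using assms by linarith
qed

lemma Ch_nu: assumes "1 \<le> c" shows "(Ch c (Suc n) - nu c * Ch c n) * nu c ^ n = 1"
proof (induction n)
  case 0 then show ?case by simp
next
  case (Suc n)
  let ?v = "nu c"
  have v0: "?v \<noteq> 0" using nu_ge1[OF assms] by simp
  have "Ch c (Suc (Suc n)) = (?v + 1/?v)*Ch c (Suc n) - Ch c n" using nu_eq[OF assms] by simp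
  then have "Ch c (Suc (Suc n)) - ?v * Ch c (Suc n) = (1/?v) * Ch c (Suc n) - Ch c n"
    by (simp add: algebra_simps)
  then have "(Ch c (Suc (Suc n)) - ?v * Ch c (Suc n)) * ?v ^ Suc n = ((1/?v) * Ch c (Suc n) - Ch c n) * ?v * ?v ^ n"
    by simp
  also have "\<dots> = (Ch c (Suc n) - ?v * Ch c n) * ?v ^ n" using v0 by (simp add: algebra_simps)
  finally show ?case using Suc by simp
qed

lemma Ch_lower: assumes "1 \<le> c" shows "nu c ^ n \<le> Ch c (Suc n)"
proof (induction n)
  case 0 then show ?case by simp
next
  case (Suc n)
  let ?v = "nu c"
  have v1: "1 \<le> ?v" using nu_ge1[OF assms] .
  have e: "Ch c (Suc (Suc n)) = ?v * Ch c (Suc n) + 1 / ?v ^ Suc n"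
    using Ch_nu[OF assms, of "Suc n"] v1 by (simp add: field_simps)
  have n: "0 \<le> 1 / ?v ^ Suc n" using v1 by simp
  have "?v * ?v ^ n \<le> ?v * Ch c (Suc n)" using Suc v1 by simp
  then have "?v ^ Suc n \<le> ?v * Ch c (Suc n)" by simp
  then show ?case unfolding e using n by linarith
qed

lemma Ch_pos: "1 \<le> c \<Longrightarrow> 0 < Ch c (Suc n)"
  using Ch_lower[of c n] nu_ge1[of c] by (smt (verit) zero_less_power)

lemma rho_gt: assumes "1 \<le> c" "1 \<le> m" shows "nu c < Ch c (Suc m) / Ch c m"
proof -
  obtain k where m: "m = Suc k" using assms(2) by (cases m) auto
  have p: "0 < Ch c m" using Ch_pos[OF assms(1)] m by simp
  have "(Ch c (Suc m) - nu c * Ch c m) * nu c ^ m = 1" by (rule Ch_nu[OF assms(1)])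
  moreover have "0 < nu c ^ m" using nu_ge1[OF assms(1)] by simp
  ultimately have "0 < Ch c (Suc m) - nu c * Ch c m" by (smt (verit) mult_nonpos_nonneg)
  then show ?thesis using p by (simp add: field_simps)
qed

lemma rho_ge1: "1 \<le> c \<Longrightarrow> 1 \<le> m \<Longrightarrow> 1 < Ch c (Suc m) / Ch c m"
  using rho_gt nu_ge1 by (smt (verit))

lemma rho_err: assumes "1 \<le> c" "1 \<le> m" shows "Ch c (Suc m) / Ch c m - nu c \<le> nu c / nu c ^ (2*m)"
proof -
  obtain k where m: "m = Suc k" using assms(2) by (cases m) auto
  let ?v = "nu c"
  have v1: "1 \<le> ?v" using nu_ge1[OF assms(1)] .
  have p: "0 < Ch c m" using Ch_pos[OF assms(1)] m by simp
  have e: "Ch c (Suc m) / Ch c m - ?v = (1 / ?v ^ m) / Ch c m"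
    using Ch_nu[OF assms(1), of m] p v1 by (simp add: field_simps)
  have lo: "?v ^ k \<le> Ch c m" using Ch_lower[OF assms(1), of k] m by simp
  have "(1 / ?v ^ m) / Ch c m \<le> (1 / ?v ^ m) / ?v ^ k"
    using lo v1 p by (intro divide_left_mono) auto
  also have "\<dots> = ?v / ?v ^ (2*m)"
  proof -
    have "?v ^ (2*m) = ?v * (?v ^ m * ?v ^ k)" using m by (simp add: power_add[symmetric] mult_2)
    then show ?thesis using v1 by (simp add: field_simps)
  qed
  finally show ?thesis using e by simp
qed

lemma rho_mono: assumes "1 \<le> c" "c \<le> d" shows "Ch c (Suc (Suc k)) / Ch c (Suc k) \<le> Ch d (Suc (Suc k)) / Ch d (Suc k)"
proof (induction k)
  case 0 then show ?case using assms by simp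
next
  case (Suc k)
  have d1: "1 \<le> d" using assms by simp
  have pc: "0 < Ch c (Suc (Suc k))" "0 < Ch d (Suc (Suc k))" "0 < Ch c (Suc k)" "0 < Ch d (Suc k)"
    using Ch_pos[OF assms(1), of "Suc k"] Ch_pos[OF d1, of "Suc k"] Ch_pos[OF assms(1), of k] Ch_pos[OF d1, of k]
    by (auto simp del: Ch.simps)
  have e1: "Ch c (Suc (Suc (Suc k))) = 2*c*Ch c (Suc (Suc k)) - Ch c (Suc k)"
     "Ch d (Suc (Suc (Suc k))) = 2*d*Ch d (Suc (Suc k)) - Ch d (Suc k)" by simp_all
  have ec: "Ch c (Suc (Suc (Suc k))) / Ch c (Suc (Suc k)) = 2*c - 1 / (Ch c (Suc (Suc k)) / Ch c (Suc k))"
    unfolding e1 using pc by (simp add: field_simps del: Ch.simps)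
  have ed: "Ch d (Suc (Suc (Suc k))) / Ch d (Suc (Suc k)) = 2*d - 1 / (Ch d (Suc (Suc k)) / Ch d (Suc k))"
    unfolding e1 using pc by (simp add: field_simps del: Ch.simps)
  have r1: "1 < Ch c (Suc (Suc k)) / Ch c (Suc k)" using rho_ge1[OF assms(1), of "Suc k"] by simp
  have "1 / (Ch d (Suc (Suc k)) / Ch d (Suc k)) \<le> 1 / (Ch c (Suc (Suc k)) / Ch c (Suc k))"
  proof -
    have gen: "\<And>x y::real. 0 < x \<Longrightarrow> x \<le> y \<Longrightarrow> 1/y \<le> 1/x" by (simp add: field_simps)
    show ?thesis by (rule gen) (use Suc r1 in \<open>auto simp del: Ch.simps\<close>)
  qed
  then show ?case unfolding ec ed using assms by linarith
qed


definition cc :: "real \<Rightarrow> real \<Rightarrow> real \<Rightarrow> real" where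
  "cc a b l = (a^2 + b^2 - (a+b-l)^2) / (2*a*b)"
definition LL :: "real \<Rightarrow> real \<Rightarrow> real" where "LL a l = 3 - l/a"
definition lstar :: "real \<Rightarrow> real \<Rightarrow> real" where
  "lstar a b = (3*a + 3*b - sqrt (9*a^2 - 14*a*b + 9*b^2)) / 2"
definition qq :: "real \<Rightarrow> real \<Rightarrow> real \<Rightarrow> real" where
  "qq a b l = l^2 - 3*(a+b)*l + 8*a*b"

context fixes a b :: real assumes b0: "0 < b" and ba: "b < a"
begin

lemma a0: "0 < a" using b0 ba by simp

lemma cc_minus1: "cc a b l - 1 = ((a-b)^2 - (a+b-l)^2) / (2*a*b)"
  unfolding cc_def using a0 b0 by (simp add: field_simps power2_eq_square)

lemma cc_ge1: assumes "2*b \<le> l" "l \<le> 2*a" shows "1 \<le> cc a b l"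
proof -
  have "\<bar>a+b-l\<bar> \<le> \<bar>a-b\<bar>" using assms ba by simp
  then have "(a+b-l)^2 \<le> (a-b)^2" by (simp add: abs_le_square_iff)
  then have "0 \<le> cc a b l - 1" unfolding cc_minus1 using a0 b0 by simp
  then show ?thesis by simp
qed

lemma cc_gt1: assumes "2*b < l" "l < 2*a" shows "1 < cc a b l"
proof -
  have "\<bar>a+b-l\<bar> < \<bar>a-b\<bar>" using assms ba by simp
  then have "(a+b-l)^2 < (a-b)^2" by (metis abs_le_square_iff not_le)
  then have "0 < cc a b l - 1" unfolding cc_minus1 using a0 b0 by simp
  then show ?thesis by simp
qed

lemma cc_mono: assumes "l1 \<le> l2" "l2 \<le> a+b" shows "cc a b l1 \<le> cc a b l2"
proof -
  have "(a+b-l2)^2 \<le> (a+b-l1)^2" using assms by (intro power_mono) auto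
  then show ?thesis unfolding cc_def using a0 b0 by (simp add: divide_right_mono)
qed

lemma cubic: "a^2*b*((LL a l)^2 - 2*cc a b l*LL a l + 1) = -(l - 2*a) * qq a b l"
  unfolding cc_def LL_def qq_def using a0 b0 by (simp add: field_simps power2_eq_square)

lemma D_pos: "0 < 9*a^2 - 14*a*b + 9*b^2"
proof -
  have "9*a^2 - 14*a*b + 9*b^2 = 9*(a-b)^2 + 4*a*b" by (simp add: algebra_simps power2_eq_square)
  moreover have "0 < 4*a*b" using a0 b0 by simp
  ultimately show ?thesis by (smt (verit) zero_le_power2)
qed

lemma qq_lstar: "qq a b (lstar a b) = 0"
proof -
  let ?s = "sqrt (9*a^2 - 14*a*b + 9*b^2)"
  have s: "?s^2 = 9*a^2 - 14*a*b + 9*b^2" using D_pos by simp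
  show ?thesis unfolding qq_def lstar_def
    by (simp add: field_simps power2_eq_square) (use s in \<open>simp add: algebra_simps power2_eq_square\<close>)
qed

lemma lstar_bounds: "2*b < lstar a b" "lstar a b < a + b"
proof -
  let ?D = "9*a^2 - 14*a*b + 9*b^2"
  have "?D < (3*a - b)^2" using a0 b0 ba by (simp add: power2_eq_square algebra_simps)
  then have "sqrt ?D < 3*a - b" using ba b0 by (intro real_less_lsqrt) auto
  then show "2*b < lstar a b" unfolding lstar_def by simp
  have e8: "?D - (a+b)^2 = 8*(a-b)^2" by (simp add: power2_eq_square algebra_simps)
  have "0 < (a-b)^2" using ba by simp
  then have "(a+b)^2 < ?D" using e8 by linarith
  then have "a + b < sqrt ?D" using a0 b0 by (simp add: real_less_rsqrt)
  then show "lstar a b < a + b" unfolding lstar_def by simp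
qed

lemma qq_factor: "qq a b l = (l - lstar a b) * (l - (3*(a+b) - lstar a b))"
proof -
  have "qq a b l - qq a b (lstar a b) = (l - lstar a b) * (l - (3*(a+b) - lstar a b))"
    unfolding qq_def by (simp add: algebra_simps power2_eq_square)
  then show ?thesis using qq_lstar by simp
qed

lemma qq_neg: assumes "a+b \<le> l" "l \<le> 2*a" shows "qq a b l < 0"
proof -
  have e: "qq a b l = (l-(a+b))*(l-2*a) + (-2*b*l + 6*a*b - 2*a^2)"
    unfolding qq_def by (simp add: algebra_simps power2_eq_square)
  have 1: "(l-(a+b))*(l-2*a) \<le> 0" using assms by (simp add: mult_nonneg_nonpos)
  have "b*(a+b) \<le> b*l" using assms b0 by simp
  moreover have "0 < (a-b)^2" using ba by simp
  moreover have "(a-b)^2 = a^2 - 2*a*b + b^2" by (simp add: algebra_simps power2_eq_square)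
  ultimately have "-2*b*l + 6*a*b - 2*a^2 < 0" by (simp add: algebra_simps power2_eq_square)
  then show ?thesis using e 1 by linarith
qed

lemma L_gt1: "l < 2*a \<Longrightarrow> 1 < LL a l"
  unfolding LL_def using a0 by (simp add: field_simps)

lemma inv_nu_le1: "1 \<le> c \<Longrightarrow> 1 / nu c \<le> 1"
  using nu_ge1[of c] by (simp add: divide_le_eq_1)

lemma L_lt_nu: assumes "a+b \<le> l" "l < 2*a" shows "LL a l < nu (cc a b l)"
proof -
  have c1: "1 \<le> cc a b l" using assms ba by (intro cc_ge1) auto
  have "-(l - 2*a) * qq a b l < 0" using qq_neg[of l] assms by (simp add: mult_pos_neg)
  then have "a^2*b*((LL a l)^2 - 2*cc a b l*LL a l + 1) < 0" using cubic by simp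
  moreover have "0 < a^2*b" using a0 b0 by simp
  ultimately have "(LL a l)^2 - 2*cc a b l*LL a l + 1 < 0"
    using b0 by (auto simp add: mult_less_0_iff)
  then have "(LL a l - nu (cc a b l)) * (LL a l - 1/nu (cc a b l)) < 0" using nu_quad[OF c1] by simp
  moreover have "0 < LL a l - 1/nu (cc a b l)" using L_gt1[OF assms(2)] inv_nu_le1[OF c1] by simp
  ultimately show ?thesis by (simp add: mult_less_0_iff)
qed

lemma nu_lt_L: assumes "2*b < l" "l < lstar a b" shows "nu (cc a b l) < LL a l"
proof -
  have lb: "l < a + b" using assms lstar_bounds by simp
  have c1: "1 \<le> cc a b l" using assms lb ba by (intro cc_ge1) auto
  have "0 < qq a b l" unfolding qq_factor using assms lstar_bounds a0 b0 by (intro mult_neg_neg) auto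
  then have "0 < -(l - 2*a) * qq a b l" using lb ba by simp
  then have "0 < a^2*b*((LL a l)^2 - 2*cc a b l*LL a l + 1)" using cubic by simp
  moreover have "0 < a^2*b" using a0 b0 by simp
  ultimately have "0 < (LL a l)^2 - 2*cc a b l*LL a l + 1"
    by (auto simp add: zero_less_mult_iff)
  then have "0 < (LL a l - nu (cc a b l)) * (LL a l - 1/nu (cc a b l))" using nu_quad[OF c1] by simp
  moreover have "0 < LL a l - 1/nu (cc a b l)" using L_gt1[of l] lb ba inv_nu_le1[OF c1] by simp
  ultimately show ?thesis by (simp add: zero_less_mult_iff)
qed

lemma nu_lstar: "nu (cc a b (lstar a b)) = LL a (lstar a b)"
proof -
  let ?l = "lstar a b"
  have c1: "1 \<le> cc a b ?l" using lstar_bounds ba by (intro cc_ge1) auto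
  have "a^2*b*((LL a ?l)^2 - 2*cc a b ?l*LL a ?l + 1) = 0" using cubic qq_lstar by simp
  then have "(LL a ?l)^2 - 2*cc a b ?l*LL a ?l + 1 = 0" using a0 b0 by simp
  then have "(LL a ?l - nu (cc a b ?l)) * (LL a ?l - 1/nu (cc a b ?l)) = 0" using nu_quad[OF c1] by simp
  moreover have "0 < LL a ?l - 1/nu (cc a b ?l)" using L_gt1[of ?l] lstar_bounds ba inv_nu_le1[OF c1] by simp
  ultimately show ?thesis by simp
qed

end

lemma Ch_cont: assumes "continuous_on S f" shows "continuous_on S (\<lambda>x. Ch (f x) n)"
proof -
  have "continuous_on S (\<lambda>x. Ch (f x) n) \<and> continuous_on S (\<lambda>x. Ch (f x) (Suc n))"
  proof (induction n)
    case 0 then show ?case by (simp add: continuous_on_const)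
  next
    case (Suc n)
    then show ?case using assms by (auto intro!: continuous_intros)
  qed
  then show ?thesis by simp
qed


definition rho :: "real \<Rightarrow> real \<Rightarrow> nat \<Rightarrow> real \<Rightarrow> real" where
  "rho a b m l = Ch (cc a b l) (Suc m) / Ch (cc a b l) m"

lemma nu_gt1: assumes "1 < c" shows "1 < nu c"
proof -
  have "1 \<le> c^2" using assms by (simp add: one_le_power)
  then have "0 \<le> sqrt (c^2-1)" by simp
  then show ?thesis unfolding nu_def using assms by linarith
qed

lemma pow_frac_mono: fixes v w :: real assumes "1 < v" "v \<le> w" "1 \<le> m" shows "w / w^(2*m) \<le> v / v^(2*m)"
proof -
  obtain k where k: "2*m = Suc k" using assms(3) by (cases "2*m") auto
  have "v^k \<le> w^k" using assms by (intro power_mono) auto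
  then have "v * w * v^k \<le> v * w * w^k" using assms by simp
  then have "w * v^(2*m) \<le> v * w^(2*m)" unfolding k by (simp add: algebra_simps)
  moreover have "0 < v^(2*m)" "0 < w^(2*m)" using assms by auto
  ultimately show ?thesis by (simp add: divide_simps)
qed

theorem analytic:
  assumes b0: "0 < b" and ba: "b < a"
  shows "\<exists>M::nat. 1 \<le> M \<and> (\<exists>A>0. \<exists>B>0. \<forall>m\<ge>M.
      (\<exists>!l. 2*b < l \<and> l < 2*a \<and> rho a b m l = LL a l) \<and>
      (\<forall>l. 2*b < l \<and> l < 2*a \<and> rho a b m l = LL a l \<longrightarrow> \<bar>l - lstar a b\<bar> < A * exp (- B * real (4*m+1))))"
proof -
  have a0: "0 < a" using b0 ba by simp
  note lsb = lstar_bounds[OF b0 ba]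
  define l0 where "l0 = (2*b + lstar a b)/2"
  have l0b: "2*b < l0" "l0 < lstar a b" "l0 < a + b" using lsb unfolding l0_def by auto
  define v0 where "v0 = nu (cc a b l0)"
  have c0: "1 < cc a b l0" using l0b ba by (intro cc_gt1[OF b0 ba]) auto
  have v0g: "1 < v0" unfolding v0_def by (rule nu_gt1[OF c0])
  define \<delta> where "\<delta> = LL a l0 - v0"
  have \<delta>: "0 < \<delta>" unfolding \<delta>_def v0_def using nu_lt_L[OF b0 ba l0b(1,2)] by simp
  obtain n where n: "v0/\<delta> < v0^n" using real_arch_pow[OF v0g] by blast
  define M where "M = Suc n"
  have key: "v0 / v0^(2*m) < \<delta>" if "M \<le> m" for m
  proof -
    have "v0^n \<le> v0^(2*m)" using that v0g unfolding M_def by (intro power_increasing) auto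
    then have "v0 / \<delta> < v0^(2*m)" using n by simp
    then show ?thesis using \<delta> v0g by (simp add: field_simps)
  qed
  define B where "B = ln v0 / 2"
  define A where "A = 2*a*v0^2"
  have B0: "0 < B" unfolding B_def using v0g by simp
  have A0: "0 < A" unfolding A_def using a0 v0g by simp
  have ccge: "1 \<le> cc a b l" if "2*b \<le> l" "l \<le> 2*a" for l using cc_ge1[OF b0 ba] that by simp
  have main: "(\<exists>!l. 2*b < l \<and> l < 2*a \<and> rho a b m l = LL a l) \<and>
      (\<forall>l. 2*b < l \<and> l < 2*a \<and> rho a b m l = LL a l \<longrightarrow> \<bar>l - lstar a b\<bar> < A * exp (- B * real (4*m+1)))"
    if mM: "M \<le> m" for m
  proof -
    have m1: "1 \<le> m" using mM unfolding M_def by simp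
    obtain k where mk: "m = Suc k" using m1 by (cases m) auto
    have rgt: "nu (cc a b l) < rho a b m l" if "2*b \<le> l" "l \<le> 2*a" for l
      unfolding rho_def using rho_gt[OF ccge[OF that] m1] .
    have rmono: "rho a b m l1 \<le> rho a b m l2" if "2*b \<le> l1" "l1 \<le> l2" "l2 \<le> a+b" for l1 l2
    proof -
      have "1 \<le> cc a b l1" using that ba by (intro ccge) auto
      moreover have "cc a b l1 \<le> cc a b l2" using that by (intro cc_mono[OF b0 ba])
      ultimately show ?thesis unfolding rho_def mk by (rule rho_mono)
    qed
    have F1: "LL a l < rho a b m l" if "a+b \<le> l" "l < 2*a" for l
      using L_lt_nu[OF b0 ba that] rgt[of l] that b0 by simp
    have F2: "rho a b m l0 < LL a l0"
    proof -
      have "rho a b m l0 - v0 \<le> v0 / v0^(2*m)" unfolding rho_def v0_def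
        using rho_err[of "cc a b l0" m] c0 m1 by simp
      then show ?thesis using key[OF mM] unfolding \<delta>_def by simp
    qed
    have F3: "rho a b m l < LL a l" if "2*b < l" "l \<le> l0" for l
    proof -
      have "rho a b m l \<le> rho a b m l0" using that l0b by (intro rmono) auto
      moreover have "LL a l0 \<le> LL a l" unfolding LL_def using that a0 by (simp add: divide_right_mono)
      ultimately show ?thesis using F2 by simp
    qed
    have F4: "LL a l < rho a b m l" if "lstar a b < l" "l < a+b" for l
    proof -
      have "nu (cc a b (lstar a b)) \<le> nu (cc a b l)"
        using that lsb ba by (intro nu_mono ccge cc_mono[OF b0 ba]) auto
      moreover have "LL a l < LL a (lstar a b)" unfolding LL_def using that a0 by (simp add: divide_strict_right_mono)
      moreover have "nu (cc a b l) < rho a b m l" using that lsb ba by (intro rgt) auto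
      ultimately show ?thesis using nu_lstar[OF b0 ba] by simp
    qed
    have loc: "l0 < l \<and> l \<le> lstar a b" if "2*b < l" "l < 2*a" "rho a b m l = LL a l" for l
      using F1[of l] F3[of l] F4[of l] that by force
    have ex: "\<exists>l. 2*b < l \<and> l < 2*a \<and> rho a b m l = LL a l"
    proof -
      have ccc: "continuous_on {l0..a+b} (\<lambda>l. cc a b l)"
        unfolding cc_def using a0 b0 by (intro continuous_intros) auto
      have nz: "\<forall>x\<in>{l0..a+b}. Ch (cc a b x) m \<noteq> 0"
      proof
        fix x assume "x \<in> {l0..a+b}"
        then have "1 \<le> cc a b x" using l0b ba by (intro ccge) auto
        then show "Ch (cc a b x) m \<noteq> 0" using Ch_pos[of "cc a b x" k] unfolding mk by simp
      qed
      have cont: "continuous_on {l0..a+b} (\<lambda>l. rho a b m l - LL a l)"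
        unfolding rho_def LL_def
        using a0 by (intro continuous_on_diff continuous_on_divide Ch_cont[OF ccc] nz continuous_intros) auto
      have "rho a b m l0 - LL a l0 \<le> 0" using F2 by simp
      moreover have "0 \<le> rho a b m (a+b) - LL a (a+b)" using F1[of "a+b"] ba by simp
      moreover have "l0 \<le> a+b" using l0b by simp
      ultimately obtain l where "l0 \<le> l" "l \<le> a+b" "rho a b m l - LL a l = 0"
        using IVT'[of "\<lambda>l. rho a b m l - LL a l" l0 0 "a+b"] cont by blast
      then show ?thesis using l0b ba by (intro exI[of _ l]) auto
    qed
    have uniq: "l1 = l2" if "2*b < l1" "l1 < 2*a" "rho a b m l1 = LL a l1"
         "2*b < l2" "l2 < 2*a" "rho a b m l2 = LL a l2" for l1 l2
    proof (rule ccontr)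
      assume ne: "l1 \<noteq> l2"
      have r1: "l0 < l1" "l1 \<le> lstar a b" using loc that by auto
      have r2: "l0 < l2" "l2 \<le> lstar a b" using loc that by auto
      show False
      proof (cases "l1 < l2")
        case True
        have "rho a b m l1 \<le> rho a b m l2" using True r1 r2 l0b lsb by (intro rmono) auto
        moreover have "LL a l2 < LL a l1" unfolding LL_def using True a0 by (simp add: divide_strict_right_mono)
        ultimately show False using that by simp
      next
        case False
        then have "l2 < l1" using ne by simp
        have "rho a b m l2 \<le> rho a b m l1" using \<open>l2 < l1\<close> r1 r2 l0b lsb by (intro rmono) auto
        moreover have "LL a l1 < LL a l2" unfolding LL_def using \<open>l2 < l1\<close> a0 by (simp add: divide_strict_right_mono)
        ultimately show False using that by simp
      qed
    qed
    have bound: "\<bar>l - lstar a b\<bar> < A * exp (- B * real (4*m+1))"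
      if "2*b < l" "l < 2*a" "rho a b m l = LL a l" for l
    proof -
      have r: "l0 < l" "l \<le> lstar a b" using loc that by auto
      have cl: "1 \<le> cc a b l" using that by (intro ccge) auto
      have cl0: "cc a b l0 \<le> cc a b l" using r lsb by (intro cc_mono[OF b0 ba]) auto
      have nul: "v0 \<le> nu (cc a b l)" unfolding v0_def using c0 cl0 by (intro nu_mono) auto
      have "nu (cc a b l) \<le> nu (cc a b (lstar a b))"
        using r lsb ba by (intro nu_mono cl cc_mono[OF b0 ba]) auto
      then have "nu (cc a b l) \<le> LL a (lstar a b)" using nu_lstar[OF b0 ba] by simp
      then have h1: "a * nu (cc a b l) \<le> a * LL a (lstar a b)" using a0 by simp
      have h2: "a * LL a (lstar a b) = 3*a - lstar a b" unfolding LL_def using a0 by (simp add: field_simps)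
      have h3: "a * (LL a l - nu (cc a b l)) = 3*a - l - a * nu (cc a b l)" unfolding LL_def using a0 by (simp add: field_simps)
      have "lstar a b - l \<le> a * (LL a l - nu (cc a b l))" using h1 h2 h3 by linarith
      also have "LL a l - nu (cc a b l) \<le> nu (cc a b l) / nu (cc a b l) ^ (2*m)"
        using rho_err[OF cl m1] that(3) unfolding rho_def by simp
      also have "\<dots> \<le> v0 / v0^(2*m)" using pow_frac_mono[OF v0g nul m1] .
      finally have e1: "\<bar>l - lstar a b\<bar> \<le> a * (v0 / v0^(2*m))" using r a0 by (simp add: mult_left_mono)
      have lnp: "0 < ln v0" using v0g by simp
      have lp: "ln (v0^(2*m+1)) = real (2*m+1) * ln v0" by (rule ln_realpow)
      have "real(4*m+1)/2 \<le> real(2*m+1)" by simp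
      then have "real(4*m+1)/2 * ln v0 \<le> real(2*m+1) * ln v0" using lnp by (intro mult_right_mono) auto
      moreover have "- B * real (4*m+1) = - (real(4*m+1)/2 * ln v0)" unfolding B_def by simp
      ultimately have "- B * real (4*m+1) \<ge> - ln (v0 ^ (2*m+1))" unfolding lp by linarith
      then have ex1: "exp (- ln (v0 ^ (2*m+1))) \<le> exp (- B * real (4*m+1))" by (simp only: exp_le_cancel_iff)
      have ex2: "exp (- ln (v0 ^ (2*m+1))) = 1 / v0^(2*m+1)"
        using v0g by (simp add: exp_minus exp_ln inverse_eq_divide)
      have e2: "1 / v0^(2*m+1) \<le> exp (- B * real (4*m+1))" using ex1 unfolding ex2 .
      have eA: "A * (1 / v0^(2*m+1)) = 2 * (a * (v0 / v0^(2*m)))"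
        unfolding A_def using v0g by (simp add: power2_eq_square)
      have "0 < a * (v0 / v0^(2*m))" using a0 v0g by simp
      then have "a * (v0 / v0^(2*m)) < A * (1 / v0^(2*m+1))" unfolding eA by simp
      also have "\<dots> \<le> A * exp (- B * real (4*m+1))" using e2 A0 by (intro mult_left_mono) auto
      finally show ?thesis using e1 by simp
    qed
    obtain l1 where l1: "2*b < l1" "l1 < 2*a" "rho a b m l1 = LL a l1" using ex by blast
    have "\<exists>!l. 2*b < l \<and> l < 2*a \<and> rho a b m l = LL a l"
      by (rule ex1I[of _ l1]) (use l1 uniq in blast)+
    then show ?thesis using bound by blast
  qed
  have M1: "1 \<le> M" unfolding M_def by simp
  show ?thesis
    apply (rule exI[of _ M])
    apply (rule conjI[OF M1])
    apply (rule exI[of _ A])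
    apply (rule conjI[OF A0])
    apply (rule exI[of _ B])
    apply (rule conjI[OF B0])
    using main by blast
qed


fun pp :: "real \<Rightarrow> real \<Rightarrow> real \<Rightarrow> nat \<Rightarrow> real" where
  "pp a b l 0 = 1"
| "pp a b l (Suc 0) = (a - l) / a"
| "pp a b l (Suc (Suc i)) = (if even i then ((a+b-l) * pp a b l (Suc i) - a * pp a b l i) / b
                            else ((a+b-l) * pp a b l (Suc i) - b * pp a b l i) / a)"

lemma pp_closed:
  fixes a b l :: real and j :: nat
  assumes a0: "a \<noteq> 0" and b0: "b \<noteq> 0"
  defines "x \<equiv> a + b - l"
  defines "c \<equiv> cc a b l"
  defines "E \<equiv> (a^2 + b*x - x^2) / (a*b)"
  shows "pp a b l (2*j+1) = (-1)^(j+1) * ((b-x)/a * Ch c (j+1) - Ch c j) \<and>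
         pp a b l (2*j+2) = (-1)^(j+1) * (E * Ch c (j+1) - Ch c j)"
proof (induction j)
  case 0
  show ?case unfolding x_def E_def using a0 b0
    by (simp add: field_simps power2_eq_square)
next
  case (Suc j)
  let ?s = "(-1::real)^(j+1)"
  have h1: "pp a b l (2*j+1) = ?s * ((b-x)/a * Ch c (j+1) - Ch c j)" using Suc.IH by (rule conjunct1)
  have h2: "pp a b l (2*j+2) = ?s * (E * Ch c (j+1) - Ch c j)" using Suc.IH by (rule conjunct2)
  have ch: "Ch c (j+2) = 2*c*Ch c (j+1) - Ch c j" by (simp add: numeral_2_eq_2)
  have c2: "2*c*(a*b) = a^2 + b^2 - x^2" unfolding c_def cc_def x_def using a0 b0 by (simp add: field_simps)
  have r1: "pp a b l (2*j+3) = (x * pp a b l (2*j+2) - b * pp a b l (2*j+1)) / a"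
  proof -
    have e: "2*j+3 = Suc (Suc (2*j+1))" "Suc (2*j+1) = 2*j+2" by simp_all
    have "pp a b l (2*j+3) = pp a b l (Suc (Suc (2*j+1)))" by (simp only: e)
    also have "\<dots> = ((a+b-l) * pp a b l (Suc (2*j+1)) - b * pp a b l (2*j+1)) / a"
      by (simp only: pp.simps(3)) (simp del: pp.simps)
    finally show ?thesis unfolding x_def e .
  qed
  have r2: "pp a b l (2*j+4) = (x * pp a b l (2*j+3) - a * pp a b l (2*j+2)) / b"
  proof -
    have e: "2*j+4 = Suc (Suc (2*j+2))" "Suc (2*j+2) = 2*j+3" by simp_all
    have "pp a b l (2*j+4) = pp a b l (Suc (Suc (2*j+2)))" by (simp only: e)
    also have "\<dots> = ((a+b-l) * pp a b l (Suc (2*j+2)) - a * pp a b l (2*j+2)) / b"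
      by (simp only: pp.simps(3)) (simp del: pp.simps)
    finally show ?thesis unfolding x_def e .
  qed
  have g1: "pp a b l (2*j+3) = (-1)^(j+2) * ((b-x)/a * Ch c (j+2) - Ch c (j+1))"
  proof -
    have "pp a b l (2*j+3) = ?s * ((x*E - b*(b-x)/a) * Ch c (j+1) + (b-x) * Ch c j) / a"
      unfolding r1 h1 h2 by (simp add: algebra_simps diff_divide_distrib add_divide_distrib)
    also have "x*E - b*(b-x)/a = a - 2*c*(b-x)"
    proof -
      have "(x*E - b*(b-x)/a) * (a*b) = x*(a^2 + b*x - x^2) - b^2*(b-x)"
        unfolding E_def using a0 b0 by (simp add: field_simps power2_eq_square)
      also have "\<dots> = a*(a*b) - (b-x)*(a^2 + b^2 - x^2)"
        by (simp add: algebra_simps power2_eq_square)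
      also have "\<dots> = a*(a*b) - (b-x)*(2*c*(a*b))" using c2 by simp
      also have "\<dots> = (a - 2*c*(b-x)) * (a*b)" by (simp add: algebra_simps)
      finally show ?thesis using a0 b0 by simp
    qed
    finally show ?thesis unfolding ch using a0 by (simp add: field_simps)
  qed
  have g2: "pp a b l (2*j+4) = (-1)^(j+2) * (E * Ch c (j+2) - Ch c (j+1))"
  proof -
    have "pp a b l (2*j+4) = (x * ((-1)^(j+2) * ((b-x)/a * Ch c (j+2) - Ch c (j+1))) - a * (?s * (E * Ch c (j+1) - Ch c j))) / b"
      unfolding r2 g1 h2 ..
    also have "\<dots> = (-1)^(j+2) * (E * Ch c (j+2) - Ch c (j+1))"
    proof -
      have cdef: "c = (a^2+b^2-x^2)/(2*a*b)" unfolding c_def cc_def x_def ..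
      have "x * ((b-x)/a * Ch c (j+2) - Ch c (j+1)) + a * (E * Ch c (j+1) - Ch c j)
          = (E * Ch c (j+2) - Ch c (j+1)) * b"
        unfolding ch E_def cdef using a0 b0
        by (simp add: field_simps power2_eq_square)
      moreover have "x * ((-1)^(j+2) * ((b-x)/a * Ch c (j+2) - Ch c (j+1))) - a * (?s * (E * Ch c (j+1) - Ch c j))
         = (-1)^(j+2) * (x * ((b-x)/a * Ch c (j+2) - Ch c (j+1)) + a * (E * Ch c (j+1) - Ch c j))"
        by (simp add: algebra_simps)
      ultimately show ?thesis using b0 by simp
    qed
    finally show ?thesis .
  qed
  have eqs: "Suc j = j+1" "j+1+1 = j+2" "2*(j+1)+1 = 2*j+3" "2*(j+1)+2 = 2*j+4" by simp_all
  show ?case using g1 g2 by (simp only: eqs)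
qed

lemma S_alg:
  fixes a b l c X Y Z :: real
  assumes a0: "a \<noteq> 0" and b0: "b \<noteq> 0" and c: "c = (a^2+b^2-(a+b-l)^2)/(2*a*b)" and Z: "Z = 2*c*Y - X"
  shows "-2*b*((b-(a+b-l))/a * Y - X) + (2*b - l)*((a^2 + b*(a+b-l) - (a+b-l)^2)/(a*b) * Y - X)
     = (l/a) * ((3*a-l)*Y - a*Z)"
  unfolding Z c using a0 b0 by (simp add: field_simps power2_eq_square)

lemma S_formula:
  fixes a b l :: real and k :: nat
  assumes a0: "a \<noteq> 0" and b0: "b \<noteq> 0"
  shows "-2*b*pp a b l (2*k+1) + (2*b - l)*pp a b l (2*k+2)
         = (-1)^(k+1) * (l/a) * ((3*a-l)*Ch (cc a b l) (k+1) - a*Ch (cc a b l) (k+2))"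
proof -
  let ?x = "a+b-l" and ?c = "cc a b l" and ?E = "(a^2 + b*(a+b-l) - (a+b-l)^2) / (a*b)"
  have p: "pp a b l (2*k+1) = (-1)^(k+1) * ((b-?x)/a * Ch ?c (k+1) - Ch ?c k)"
          "pp a b l (2*k+2) = (-1)^(k+1) * (?E * Ch ?c (k+1) - Ch ?c k)"
    using pp_closed[OF a0 b0, of l k] by auto
  have ch: "Ch ?c (k+2) = 2*?c*Ch ?c (k+1) - Ch ?c k" by (simp add: numeral_2_eq_2)
  have "-2*b*((b-?x)/a * Ch ?c (k+1) - Ch ?c k) + (2*b - l)*(?E * Ch ?c (k+1) - Ch ?c k)
        = (l/a) * ((3*a-l)*Ch ?c (k+1) - a*Ch ?c (k+2))"
    using S_alg[where a=a and b=b and l=l and c="cc a b l" and X="Ch (cc a b l) k" and Y="Ch (cc a b l) (k+1)" and Z="Ch (cc a b l) (k+2)", OF a0 b0 cc_def ch] .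
  moreover have "\<And>s A B::real. -2*b*(s*A) + (2*b - l)*(s*B) = s * (-2*b*A + (2*b-l)*B)"
    by (simp add: algebra_simps)
  ultimately show ?thesis unfolding p by (metis mult.assoc)
qed

lemma Ch_step_ge: "1 \<le> c \<Longrightarrow> Ch c n \<le> Ch c (Suc n)"
proof -
  assume c: "1 \<le> c"
  have "(Ch c (Suc n) - nu c * Ch c n) * nu c ^ n = 1" by (rule Ch_nu[OF c])
  moreover have "0 < nu c ^ n" using nu_ge1[OF c] by simp
  ultimately have "0 < Ch c (Suc n) - nu c * Ch c n" by (smt (verit) mult_nonpos_nonneg)
  moreover have "0 \<le> Ch c n" using Ch_pos[OF c] by (cases n) (auto intro: less_imp_le)
  moreover have "Ch c n \<le> nu c * Ch c n" using nu_ge1[OF c] \<open>0 \<le> Ch c n\<close> by (simp add: mult_le_cancel_right1)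
  ultimately show ?thesis by linarith
qed

lemma pp_2m_ne:
  fixes a b l :: real and k :: nat
  assumes b0: "0 < b" and ba: "b < a" and l: "2*b < l" "l < 2*a"
  shows "pp a b l (2*k+2) \<noteq> 0"
proof -
  have a0: "0 < a" using b0 ba by simp
  let ?x = "a+b-l" and ?c = "cc a b l" and ?E = "(a^2 + b*(a+b-l) - (a+b-l)^2) / (a*b)"
  have p: "pp a b l (2*k+2) = (-1)^(k+1) * (?E * Ch ?c (k+1) - Ch ?c k)"
    using pp_closed[of a b l k] a0 b0 by auto
  have E1: "1 < ?E"
  proof -
    have "a^2 + b*?x - ?x^2 - a*b = (a - ?x) * (a + ?x - b)" by (simp add: algebra_simps power2_eq_square)
    moreover have "0 < (a - ?x) * (a + ?x - b)" using l ba b0 by (intro mult_pos_pos) auto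
    ultimately have "a*b < a^2 + b*?x - ?x^2" by simp
    then show ?thesis using a0 b0 by (simp add: field_simps)
  qed
  have c1: "1 \<le> ?c" using cc_ge1[OF b0 ba, of l] l by simp
  have pos: "0 < Ch ?c (k+1)" using Ch_pos[OF c1, of k] by simp
  have ge: "Ch ?c k \<le> Ch ?c (k+1)" using Ch_step_ge[OF c1, of k] by simp
  have "1 * Ch ?c (k+1) < ?E * Ch ?c (k+1)" by (rule mult_strict_right_mono[OF E1 pos])
  then have "0 < ?E * Ch ?c (k+1) - Ch ?c k" using ge by simp
  then show ?thesis unfolding p by simp
qed

lemma rho_iff_S:
  fixes a b l :: real and k :: nat
  assumes b0: "0 < b" and ba: "b < a" and l: "2*b < l" "l < 2*a"
  shows "rho a b (Suc k) l = LL a l \<longleftrightarrow> -2*b*pp a b l (2*k+1) + (2*b - l)*pp a b l (2*k+2) = 0"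
proof -
  have a0: "0 < a" using b0 ba by simp
  have l0: "0 < l" using l b0 by simp
  let ?c = "cc a b l"
  have c1: "1 \<le> ?c" using cc_ge1[OF b0 ba, of l] l by simp
  have pos: "0 < Ch ?c (Suc k)" using Ch_pos[OF c1, of k] by simp
  have "rho a b (Suc k) l = LL a l \<longleftrightarrow> (3*a-l)*Ch ?c (k+1) - a*Ch ?c (k+2) = 0"
    unfolding rho_def LL_def using pos a0 by (auto simp add: field_simps simp del: Ch.simps)
  also have "\<dots> \<longleftrightarrow> -2*b*pp a b l (2*k+1) + (2*b - l)*pp a b l (2*k+2) = 0"
    unfolding S_formula[of a b l k, OF a0[THEN less_imp_neq, symmetric] b0[THEN less_imp_neq, symmetric]]
    using a0 b0 l0 by simp
  finally show ?thesis .
qed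


definition ce :: "real \<Rightarrow> real \<Rightarrow> nat \<Rightarrow> nat \<Rightarrow> nat \<Rightarrow> real" where
  "ce s1 s2 m i j = cap_entry s1 s2 m (i+1) (j+1)"

definition offd :: "real \<Rightarrow> real \<Rightarrow> nat \<Rightarrow> nat \<Rightarrow> real" where
  "offd s1 s2 m k = (if k \<le> 2*m then (if odd k then -(1/s1) else -(1/s2)) else (if odd k then -(1/s2) else -(1/s1)))"

lemma ce_far: "j \<noteq> i \<Longrightarrow> j \<noteq> i+1 \<Longrightarrow> i \<noteq> j+1 \<Longrightarrow> ce s1 s2 m i j = 0"
  unfolding ce_def cap_entry_def Let_def by auto

lemma ce_diag: "ce s1 s2 m i i = (if i = 0 \<or> i = 4*m then 1/s1 else if i = 2*m then 2/s2 else 1/s1 + 1/s2)"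
  unfolding ce_def cap_entry_def Let_def by auto

lemma ce_up: "ce s1 s2 m i (i+1) = offd s1 s2 m (i+1)"
  unfolding ce_def cap_entry_def Let_def offd_def by auto

lemma ce_down: "ce s1 s2 m (i+1) i = offd s1 s2 m (i+1)"
  unfolding ce_def cap_entry_def Let_def offd_def by auto

lemma offd_mirror: "1 \<le> k \<Longrightarrow> k \<le> 4*m \<Longrightarrow> offd s1 s2 m (4*m+1-k) = offd s1 s2 m k"
proof -
  assume k: "1 \<le> k" "k \<le> 4*m"
  have par: "odd (4*m+1-k) \<longleftrightarrow> even k" using k by presburger
  have le: "4*m+1-k \<le> 2*m \<longleftrightarrow> \<not> k \<le> 2*m" using k by auto
  show ?thesis unfolding offd_def using par le by auto
qed

lemma ce_mirror: assumes "i < 4*m+1" "j < 4*m+1"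
  shows "ce s1 s2 m (4*m-i) (4*m-j) = ce s1 s2 m i j"
proof -
  consider "j = i" | "j = i+1" | "i = j+1" | "j \<noteq> i \<and> j \<noteq> i+1 \<and> i \<noteq> j+1" by auto
  then show ?thesis
  proof cases
    case 1
    then show ?thesis using assms by (auto simp add: ce_diag)
  next
    case 2
    then have "4*m-i = (4*m-j)+1" using assms by auto
    then have "ce s1 s2 m (4*m-i) (4*m-j) = offd s1 s2 m (4*m-j+1)" using ce_down by metis
    also have "4*m-j+1 = 4*m+1-(i+1)" using 2 assms by auto
    also have "offd s1 s2 m \<dots> = offd s1 s2 m (i+1)" using assms 2 by (intro offd_mirror) auto
    finally show ?thesis using 2 ce_up by simp
  next
    case 3
    then have "4*m-j = (4*m-i)+1" using assms by auto
    then have "ce s1 s2 m (4*m-i) (4*m-j) = offd s1 s2 m (4*m-i+1)" using ce_up by metis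
    also have "4*m-i+1 = 4*m+1-(j+1)" using 3 assms by auto
    also have "offd s1 s2 m \<dots> = offd s1 s2 m (j+1)" using assms 3 by (intro offd_mirror) auto
    finally show ?thesis using 3 ce_down by simp
  next
    case 4
    then have "ce s1 s2 m i j = 0" by (intro ce_far) auto
    moreover have "ce s1 s2 m (4*m-i) (4*m-j) = 0" using 4 assms by (intro ce_far) auto
    ultimately show ?thesis by simp
  qed
qed

lemma row_sum:
  assumes "i < N" "N = 4*m+1"
  shows "(\<Sum>j<N. ce s1 s2 m i j * v j) =
    (if i = 0 then 0 else ce s1 s2 m i (i-1) * v (i-1)) + ce s1 s2 m i i * v i
    + (if i+1 < N then ce s1 s2 m i (i+1) * v (i+1) else 0)"
proof -
  let ?f = "\<lambda>j. ce s1 s2 m i j * v j"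
  let ?S = "{j. j < N \<and> (j+1 = i \<or> j = i \<or> j = i+1)}"
  have "(\<Sum>j<N. ?f j) = (\<Sum>j\<in>?S. ?f j)"
    by (rule sum.mono_neutral_right) (auto intro: ce_far)
  also have "?S = (if i = 0 then {} else {i-1}) \<union> {i} \<union> (if i+1 < N then {i+1} else {})"
    using assms by auto
  also have "(\<Sum>j\<in>\<dots>. ?f j) = (if i = 0 then 0 else ?f (i-1)) + ?f i + (if i+1 < N then ?f (i+1) else 0)"
    by (cases "i = 0"; cases "i+1 < N") auto
  finally show ?thesis by simp
qed


definition RS :: "real \<Rightarrow> real \<Rightarrow> nat \<Rightarrow> (nat \<Rightarrow> real) \<Rightarrow> nat \<Rightarrow> real" where
  "RS s1 s2 m v i = (\<Sum>j<4*m+1. ce s1 s2 m i j * v j)"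

lemma RS_cong: "(\<And>j. j < 4*m+1 \<Longrightarrow> v j = w j) \<Longrightarrow> RS s1 s2 m v i = RS s1 s2 m w i"
  unfolding RS_def by (intro sum.cong) auto

lemma RS_mirror: assumes "i < 4*m+1"
  shows "RS s1 s2 m v (4*m-i) = RS s1 s2 m (\<lambda>j. v (4*m-j)) i"
proof -
  have "RS s1 s2 m v (4*m-i) = (\<Sum>j<4*m+1. ce s1 s2 m (4*m-i) (4*m+1 - Suc j) * v (4*m+1 - Suc j))"
    unfolding RS_def by (rule sum.nat_diff_reindex[symmetric])
  also have "\<dots> = (\<Sum>j<4*m+1. ce s1 s2 m i j * v (4*m-j))"
    by (intro sum.cong) (use assms ce_mirror in auto)
  finally show ?thesis unfolding RS_def .
qed

lemma RS_row0: assumes "1 \<le> m" shows "RS s1 s2 m v 0 = 1/s1 * v 0 - 1/s1 * v 1"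
proof -
  have "RS s1 s2 m v 0 = ce s1 s2 m 0 0 * v 0 + ce s1 s2 m 0 1 * v 1"
    unfolding RS_def using row_sum[of 0 "4*m+1" m s1 s2 v] assms by simp
  moreover have "ce s1 s2 m 0 1 = -(1/s1)" using ce_up[of s1 s2 m 0] assms unfolding offd_def by simp
  ultimately show ?thesis by (simp add: ce_diag)
qed

lemma RS_rowS: assumes "Suc i < 2*m"
  shows "RS s1 s2 m v (Suc i) = (if even i then -(1/s1) else -(1/s2)) * v i + (1/s1 + 1/s2) * v (Suc i)
                                + (if even i then -(1/s2) else -(1/s1)) * v (Suc (Suc i))"
proof -
  have "RS s1 s2 m v (Suc i) = ce s1 s2 m (Suc i) i * v i + ce s1 s2 m (Suc i) (Suc i) * v (Suc i)
          + ce s1 s2 m (Suc i) (Suc (Suc i)) * v (Suc (Suc i))"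
    unfolding RS_def using row_sum[of "Suc i" "4*m+1" m s1 s2 v] assms by simp
  moreover have "ce s1 s2 m (Suc i) i = (if even i then -(1/s1) else -(1/s2))"
    using ce_down[of s1 s2 m i] assms unfolding offd_def by simp
  moreover have "ce s1 s2 m (Suc i) (Suc (Suc i)) = (if even i then -(1/s2) else -(1/s1))"
    using ce_up[of s1 s2 m "Suc i"] assms unfolding offd_def by simp
  moreover have "ce s1 s2 m (Suc i) (Suc i) = 1/s1 + 1/s2" using assms by (simp add: ce_diag)
  ultimately show ?thesis by simp
qed

lemma RS_center: assumes "1 \<le> m"
  shows "RS s1 s2 m v (2*m) = -(1/s2) * v (2*m-1) + 2/s2 * v (2*m) - (1/s2) * v (2*m+1)"
proof -
  obtain k where k: "2*m = Suc k" using assms by (cases "2*m") auto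
  have "RS s1 s2 m v (2*m) = ce s1 s2 m (2*m) (2*m-1) * v (2*m-1) + ce s1 s2 m (2*m) (2*m) * v (2*m)
          + ce s1 s2 m (2*m) (2*m+1) * v (2*m+1)"
    unfolding RS_def using row_sum[of "2*m" "4*m+1" m s1 s2 v] assms by simp
  moreover have "ce s1 s2 m (2*m) (2*m-1) = -(1/s2)"
  proof -
    have "odd k" using k by presburger
    then show ?thesis using ce_down[of s1 s2 m k] k unfolding offd_def by simp
  qed
  moreover have "ce s1 s2 m (2*m) (2*m+1) = -(1/s2)"
    using ce_up[of s1 s2 m "2*m"] unfolding offd_def by simp
  moreover have "ce s1 s2 m (2*m) (2*m) = 2/s2" using assms by (simp add: ce_diag)
  ultimately show ?thesis by simp
qed

lemma left_forward:
  assumes s: "0 < s1" "0 < s2" and m1: "1 \<le> m" and rows: "\<forall>i<2*m. RS s1 s2 m v i = l * v i"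
  shows "\<forall>i\<le>2*m. v i = v 0 * pp (1/s1) (1/s2) l i"
proof -
  let ?a = "1/s1" and ?b = "1/s2"
  have a0: "?a \<noteq> 0" "?b \<noteq> 0" using s by auto
  have P: "i+1 \<le> 2*m \<longrightarrow> v i = v 0 * pp ?a ?b l i \<and> v (i+1) = v 0 * pp ?a ?b l (i+1)" for i
  proof (induction i)
    case 0
    show ?case
    proof
      assume "0+1 \<le> 2*m"
      then have "RS s1 s2 m v 0 = l * v 0" using rows by simp
      then have "?a * v 0 - ?a * v 1 = l * v 0" using RS_row0[OF m1] by simp
      moreover have "\<And>a x y. a \<noteq> 0 \<Longrightarrow> a*x - a*y = l*x \<Longrightarrow> y = x*((a-l)/a)"
        by (simp add: field_simps)
      ultimately have "v 1 = v 0 * ((?a - l) / ?a)" using a0 by blast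
      then show "v 0 = v 0 * pp ?a ?b l 0 \<and> v (0+1) = v 0 * pp ?a ?b l (0+1)" by simp
    qed
  next
    case (Suc i)
    show ?case
    proof
      assume le: "Suc i + 1 \<le> 2*m"
      then have IH: "v i = v 0 * pp ?a ?b l i" "v (Suc i) = v 0 * pp ?a ?b l (Suc i)" using Suc by auto
      have "RS s1 s2 m v (Suc i) = l * v (Suc i)" using rows le by simp
      then have r: "(if even i then -?a else -?b) * v i + (?a + ?b) * v (Suc i)
                                + (if even i then -?b else -?a) * v (Suc (Suc i)) = l * v (Suc i)"
        using RS_rowS[of i m s1 s2 v] le by simp
      have "v (Suc (Suc i)) = v 0 * pp ?a ?b l (Suc (Suc i))"
      proof (cases "even i")
        case True
        then have "v (Suc (Suc i)) = ((?a + ?b - l) * v (Suc i) - ?a * v i) / ?b" using r a0 by (simp add: field_simps)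
        then show ?thesis using True IH by (simp add: algebra_simps diff_divide_distrib)
      next
        case False
        then have "v (Suc (Suc i)) = ((?a + ?b - l) * v (Suc i) - ?b * v i) / ?a" using r a0 by (simp add: field_simps)
        then show ?thesis using False IH by (simp add: algebra_simps diff_divide_distrib)
      qed
      then show "v (Suc i) = v 0 * pp ?a ?b l (Suc i) \<and> v (Suc i + 1) = v 0 * pp ?a ?b l (Suc i + 1)"
        using IH by simp
    qed
  qed
  show ?thesis
  proof (intro allI impI)
    fix i assume "i \<le> 2*m"
    then show "v i = v 0 * pp ?a ?b l i"
    proof (cases i)
      case 0 then show ?thesis by simp
    next
      case (Suc j)
      then show ?thesis using P[of j] \<open>i \<le> 2*m\<close> by simp
    qed
  qed
qed

lemma left_backward:
  assumes s: "0 < s1" "0 < s2" and m1: "1 \<le> m" and vdef: "\<forall>i\<le>2*m. v i = pp (1/s1) (1/s2) l i"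
  shows "\<forall>i<2*m. RS s1 s2 m v i = l * v i"
proof (intro allI impI)
  let ?a = "1/s1" and ?b = "1/s2"
  have a0: "?a \<noteq> 0" "?b \<noteq> 0" using s by auto
  fix i assume i: "i < 2*m"
  show "RS s1 s2 m v i = l * v i"
  proof (cases i)
    case 0
    have "v 0 = 1" "v 1 = (?a - l)/?a" using vdef i by auto
    moreover have "\<And>a. a \<noteq> 0 \<Longrightarrow> a*1 - a*((a-l)/a) = l*1" by (simp add: field_simps)
    ultimately show ?thesis using 0 RS_row0[OF m1, of s1 s2 v] a0 by simp
  next
    case (Suc j)
    have v: "v j = pp ?a ?b l j" "v (Suc j) = pp ?a ?b l (Suc j)" "v (Suc (Suc j)) = pp ?a ?b l (Suc (Suc j))"
      using vdef i Suc by auto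
    show ?thesis
    proof (cases "even j")
      case True
      have "pp ?a ?b l (Suc (Suc j)) = ((?a + ?b - l) * pp ?a ?b l (Suc j) - ?a * pp ?a ?b l j) / ?b"
        using True by simp
      then show ?thesis unfolding Suc RS_rowS[of j m s1 s2 v, OF i[unfolded Suc]] v using True a0
        by (simp add: field_simps)
    next
      case False
      have "pp ?a ?b l (Suc (Suc j)) = ((?a + ?b - l) * pp ?a ?b l (Suc j) - ?b * pp ?a ?b l j) / ?a"
        using False by simp
      then show ?thesis unfolding Suc RS_rowS[of j m s1 s2 v, OF i[unfolded Suc]] v using False a0
        by (simp add: field_simps)
    qed
  qed
qed


lemma cap_mat_mult:
  assumes "dim_vec w = 4*m+1" "i < 4*m+1"
  shows "(cap_mat s1 s2 m *\<^sub>v w) $ i = RS s1 s2 m (\<lambda>j. w $ j) i"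
proof -
  have "(cap_mat s1 s2 m *\<^sub>v w) $ i = row (cap_mat s1 s2 m) i \<bullet> w"
    using assms by (simp add: cap_mat_def)
  also have "\<dots> = (\<Sum>j\<in>{0..<4*m+1}. row (cap_mat s1 s2 m) i $ j * w $ j)"
    unfolding scalar_prod_def using assms by simp
  also have "\<dots> = (\<Sum>j<4*m+1. ce s1 s2 m i j * w $ j)"
    unfolding atLeast0LessThan using assms
    by (intro sum.cong) (auto simp: cap_mat_def ce_def)
  finally show ?thesis unfolding RS_def .
qed

lemma vec_nz: fixes v :: "nat \<Rightarrow> real"
  assumes "\<exists>i<N. v i \<noteq> 0" shows "vec N v \<noteq> 0\<^sub>v N"
proof
  assume "vec N v = 0\<^sub>v N"
  then have "\<forall>i<N. v i = 0" by (metis index_vec index_zero_vec(1))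
  then show False using assms by blast
qed

lemma eig_fun: "eigenvalue (cap_mat s1 s2 m) l \<longleftrightarrow>
   (\<exists>v. (\<exists>i<4*m+1. v i \<noteq> 0) \<and> (\<forall>i<4*m+1. RS s1 s2 m v i = l * v i))"
proof
  assume "eigenvalue (cap_mat s1 s2 m) l"
  then obtain w where ev: "eigenvector (cap_mat s1 s2 m) w l" unfolding eigenvalue_def by blast
  have dr: "dim_row (cap_mat s1 s2 m) = 4*m+1" by (simp add: cap_mat_def)
  have w: "w \<in> carrier_vec (4*m+1)" "w \<noteq> 0\<^sub>v (4*m+1)" "cap_mat s1 s2 m *\<^sub>v w = l \<cdot>\<^sub>v w"
    using ev unfolding eigenvector_def dr by auto
  have dw: "dim_vec w = 4*m+1" using w(1) by simp
  have nz: "\<exists>i<4*m+1. w $ i \<noteq> 0"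
  proof (rule ccontr)
    assume "\<not> ?thesis"
    then have "w = 0\<^sub>v (4*m+1)" using dw by (intro eq_vecI) auto
    then show False using w(2) by simp
  qed
  have eq: "\<forall>i<4*m+1. RS s1 s2 m (\<lambda>j. w $ j) i = l * w $ i"
  proof (intro allI impI)
    fix i assume i: "i < 4*m+1"
    have "RS s1 s2 m (\<lambda>j. w $ j) i = (cap_mat s1 s2 m *\<^sub>v w) $ i" using cap_mat_mult[OF dw i] by simp
    also have "\<dots> = l * w $ i" using w(3) i dw by simp
    finally show "RS s1 s2 m (\<lambda>j. w $ j) i = l * w $ i" .
  qed
  show "\<exists>v. (\<exists>i<4*m+1. v i \<noteq> 0) \<and> (\<forall>i<4*m+1. RS s1 s2 m v i = l * v i)"
    using nz eq by (intro exI[of _ "\<lambda>j. w $ j"]) simp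
next
  assume "\<exists>v. (\<exists>i<4*m+1. v i \<noteq> 0) \<and> (\<forall>i<4*m+1. RS s1 s2 m v i = l * v i)"
  then obtain v where v1: "\<exists>i<4*m+1. v i \<noteq> 0" and v2: "\<forall>i<4*m+1. RS s1 s2 m v i = l * v i" by blast
  have dw: "dim_vec (vec (4*m+1) v) = 4*m+1" by simp
  have nz: "vec (4*m+1) v \<noteq> 0\<^sub>v (4*m+1)" by (rule vec_nz[OF v1])
  have eq: "cap_mat s1 s2 m *\<^sub>v vec (4*m+1) v = l \<cdot>\<^sub>v vec (4*m+1) v"
  proof (rule eq_vecI)
    fix i assume i: "i < dim_vec (l \<cdot>\<^sub>v vec (4*m+1) v)"
    then have i': "i < 4*m+1" by simp
    have "(cap_mat s1 s2 m *\<^sub>v vec (4*m+1) v) $ i = RS s1 s2 m (\<lambda>j. vec (4*m+1) v $ j) i"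
      by (rule cap_mat_mult[OF dw i'])
    also have "\<dots> = RS s1 s2 m v i" by (intro RS_cong) simp
    also have "\<dots> = l * v i" using v2 i' by simp
    also have "\<dots> = (l \<cdot>\<^sub>v vec (4*m+1) v) $ i" using i' by simp
    finally show "(cap_mat s1 s2 m *\<^sub>v vec (4*m+1) v) $ i = (l \<cdot>\<^sub>v vec (4*m+1) v) $ i" .
  next
    show "dim_vec (cap_mat s1 s2 m *\<^sub>v vec (4*m+1) v) = dim_vec (l \<cdot>\<^sub>v vec (4*m+1) v)"
      by (simp add: cap_mat_def)
  qed
  have "eigenvector (cap_mat s1 s2 m) (vec (4*m+1) v) l"
    unfolding eigenvector_def using nz eq by (simp add: cap_mat_def)
  then show "eigenvalue (cap_mat s1 s2 m) l" unfolding eigenvalue_def by blast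
qed


lemma alg_center: fixes b l P Q :: real shows "-2*b*P + (2*b - l)*Q = 0 \<Longrightarrow> -b*P + 2*b*Q - b*P = l*Q"
  by (simp add: algebra_simps)

lemma alg_center2: fixes b l P Q x :: real
  shows "-b*(x*P) + 2*b*(x*Q) - b*(x*P) = l*(x*Q) \<Longrightarrow> x * (-2*b*P + (2*b - l)*Q) = 0"
  by (simp add: algebra_simps)

theorem eig_iff:
  assumes s1: "0 < s1" and s12: "s1 < s2" and m1: "1 \<le> m" and l: "2/s2 < l" "l < 2/s1"
  shows "eigenvalue (cap_mat s1 s2 m) l \<longleftrightarrow> rho (1/s1) (1/s2) m l = LL (1/s1) l"
proof -
  let ?a = "1/s1" and ?b = "1/s2" and ?N = "4*m+1"
  have s2: "0 < s2" using s1 s12 by simp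
  have b0: "0 < ?b" using s2 by simp
  have ba: "?b < ?a" using s1 s12 by (simp add: frac_less2)
  have lb: "2*?b < l" "l < 2*?a" using l by auto
  obtain k where k: "m = Suc k" using m1 by (cases m) auto
  have i2m: "2*m = 2*k+2" "2*m - 1 = 2*k+1" using k by auto
  let ?S = "-2*?b*pp ?a ?b l (2*k+1) + (2*?b - l)*pp ?a ?b l (2*k+2)"
  have RI: "rho ?a ?b m l = LL ?a l \<longleftrightarrow> ?S = 0" unfolding k by (rule rho_iff_S[OF b0 ba lb])
  have pne: "pp ?a ?b l (2*k+2) \<noteq> 0" by (rule pp_2m_ne[OF b0 ba lb])
  have cen: "RS s1 s2 m v (2*m) = -?b * v (2*k+1) + 2/s2 * v (2*k+2) - ?b * v (2*k+3)" for v
    using RS_center[OF m1, of s1 s2 v] i2m by (simp add: numeral_3_eq_3)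
  show ?thesis
  proof
    assume "eigenvalue (cap_mat s1 s2 m) l"
    then obtain v where nz: "\<exists>i<?N. v i \<noteq> 0" and EQ: "\<forall>i<?N. RS s1 s2 m v i = l * v i"
      unfolding eig_fun by blast
    define w where "w = (\<lambda>j. v (4*m - j))"
    have EQw: "\<forall>i<?N. RS s1 s2 m w i = l * w i"
    proof (intro allI impI)
      fix i assume i: "i < ?N"
      have "RS s1 s2 m w i = RS s1 s2 m v (4*m - i)" unfolding w_def using RS_mirror[OF i] by simp
      also have "\<dots> = l * v (4*m - i)" using EQ by simp
      finally show "RS s1 s2 m w i = l * w i" unfolding w_def .
    qed
    have "\<forall>i<2*m. RS s1 s2 m v i = l * v i" using EQ by simp
    then have LV: "\<forall>i\<le>2*m. v i = v 0 * pp ?a ?b l i" by (rule left_forward[OF s1 s2 m1])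
    have "\<forall>i<2*m. RS s1 s2 m w i = l * w i" using EQw by simp
    then have LW: "\<forall>i\<le>2*m. w i = w 0 * pp ?a ?b l i" by (rule left_forward[OF s1 s2 m1])
    have w2m: "w (2*m) = v (2*m)" unfolding w_def by (simp add: mult_2)
    have x1: "v (2*m) = v 0 * pp ?a ?b l (2*m)" using LV[rule_format, of "2*m"] by simp
    have x2: "w (2*m) = w 0 * pp ?a ?b l (2*m)" using LW[rule_format, of "2*m"] by simp
    have x3: "w 0 = v (4*m)" unfolding w_def by simp
    have "v 0 * pp ?a ?b l (2*m) = v (4*m) * pp ?a ?b l (2*m)"
      using x1 x2 x3 w2m by simp
    then have v0: "v 0 = v (4*m)" using pne i2m by simp
    have allv: "v i = v 0 * pp ?a ?b l (if i \<le> 2*m then i else 4*m - i)" if i: "i < ?N" for i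
    proof (cases "i \<le> 2*m")
      case True then show ?thesis using LV[rule_format, OF True] by simp
    next
      case False
      then have "4*m - i \<le> 2*m" by simp
      then have "w (4*m - i) = w 0 * pp ?a ?b l (4*m - i)" using LW[rule_format, of "4*m-i"] by simp
      moreover have "w (4*m - i) = v i" unfolding w_def using i by simp
      ultimately show ?thesis using False v0 unfolding w_def by simp
    qed
    have v0nz: "v 0 \<noteq> 0"
    proof
      assume "v 0 = 0"
      then have "\<forall>i<?N. v i = 0" using allv by (metis mult_zero_left)
      then show False using nz by blast
    qed
    have "RS s1 s2 m v (2*m) = l * v (2*m)" using EQ by simp
    then have c: "-?b * v (2*k+1) + 2/s2 * v (2*k+2) - ?b * v (2*k+3) = l * v (2*k+2)"
      unfolding cen using i2m by simp
    have e1: "v (2*k+1) = v 0 * pp ?a ?b l (2*k+1)" using allv[of "2*k+1"] k by simp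
    have e2: "v (2*k+2) = v 0 * pp ?a ?b l (2*k+2)" using allv[of "2*k+2"] k by simp
    have e3: "v (2*k+3) = v 0 * pp ?a ?b l (2*k+1)"
    proof -
      have "4*m - (2*k+3) = 2*k+1" using k by simp
      then show ?thesis using allv[of "2*k+3"] k by simp
    qed
    have "2/s2 = 2*?b" by simp
    then have c': "-?b * (v 0 * pp ?a ?b l (2*k+1)) + 2*?b * (v 0 * pp ?a ?b l (2*k+2)) - ?b * (v 0 * pp ?a ?b l (2*k+1))
       = l * (v 0 * pp ?a ?b l (2*k+2))" using c unfolding e1 e2 e3 by (simp del: pp.simps)
    have "v 0 * ?S = 0" by (rule alg_center2[OF c'])
    then have "?S = 0" using v0nz by simp
    then show "rho ?a ?b m l = LL ?a l" using RI by simp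
  next
    assume "rho ?a ?b m l = LL ?a l"
    then have S0: "?S = 0" using RI by simp
    define v where "v = (\<lambda>i. pp ?a ?b l (if i \<le> 2*m then i else 4*m - i))"
    have vl: "\<forall>i\<le>2*m. v i = pp ?a ?b l i" unfolding v_def by simp
    have L: "\<forall>i<2*m. RS s1 s2 m v i = l * v i" by (rule left_backward[OF s1 s2 m1 vl])
    have C: "RS s1 s2 m v (2*m) = l * v (2*m)"
    proof -
      have "v (2*k+1) = pp ?a ?b l (2*k+1)" "v (2*k+2) = pp ?a ?b l (2*k+2)" "v (2*k+3) = pp ?a ?b l (2*k+1)"
        unfolding v_def using k by auto
      moreover have "2/s2 = 2*?b" by simp
      ultimately show ?thesis unfolding cen using S0 i2m alg_center[of ?b "pp ?a ?b l (2*k+1)" l "pp ?a ?b l (2*k+2)"]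
        by (simp del: pp.simps)
    qed
    have EQ: "\<forall>i<?N. RS s1 s2 m v i = l * v i"
    proof (intro allI impI)
      fix i assume i: "i < ?N"
      show "RS s1 s2 m v i = l * v i"
      proof (cases "i \<le> 2*m")
        case True
        then show ?thesis using L C by (cases "i = 2*m") auto
      next
        case False
        have j: "4*m - i < ?N" "4*m - i < 2*m" using False i by auto
        have "RS s1 s2 m v i = RS s1 s2 m v (4*m - (4*m - i))" using i by simp
        also have "\<dots> = RS s1 s2 m (\<lambda>j. v (4*m - j)) (4*m - i)" by (rule RS_mirror[OF j(1)])
        also have "\<dots> = RS s1 s2 m v (4*m - i)"
          by (intro RS_cong) (auto simp: v_def intro!: arg_cong[where f="pp ?a ?b l"])
        also have "\<dots> = l * v (4*m - i)" using L j by simp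
        also have "v (4*m - i) = v i" unfolding v_def using False i by auto
        finally show ?thesis .
      qed
    qed
    have "v 0 = 1" unfolding v_def by simp
    then have "\<exists>i<?N. v i \<noteq> 0" by (intro exI[of _ 0]) simp
    then show "eigenvalue (cap_mat s1 s2 m) l" unfolding eig_fun using EQ by blast
  qed
qed


lemma sqrt_diff_bound: fixes x y :: real assumes "0 \<le> x" "0 < y"
  shows "\<bar>sqrt x - sqrt y\<bar> \<le> \<bar>x - y\<bar> / sqrt y"
proof -
  have sy: "0 < sqrt y" using assms by simp
  have sx: "0 \<le> sqrt x" using assms by simp
  have "(sqrt x - sqrt y) * (sqrt x + sqrt y) = x - y"
    using assms by (simp add: algebra_simps power2_eq_square[symmetric])
  then have e: "\<bar>sqrt x - sqrt y\<bar> * (sqrt x + sqrt y) = \<bar>x - y\<bar>"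
    using sx sy by (metis abs_mult abs_of_nonneg add_nonneg_nonneg less_imp_le)
  have "\<bar>sqrt x - sqrt y\<bar> * sqrt y \<le> \<bar>sqrt x - sqrt y\<bar> * (sqrt x + sqrt y)"
    using sx by (intro mult_left_mono) auto
  then have "\<bar>sqrt x - sqrt y\<bar> * sqrt y \<le> \<bar>x - y\<bar>" using e by simp
  then show ?thesis using sy by (simp add: field_simps)
qed

lemma lambda_star_eq: "lambda_star s1 s2 = lstar (1/s1) (1/s2)"
  unfolding lambda_star_def lstar_def by (simp add: power_divide)

theorem mainTheorem9:
  fixes s1 s2 :: real
  assumes "0 < s1" and "s1 < s2"
  shows "lambda_star s1 s2 \<in> {2/s2<..<2/s1} \<and>
    (\<exists>N0::nat. \<exists>A B::real. A > 0 \<and> B > 0 \<and>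
      (\<forall>m::nat. m \<ge> 1 \<longrightarrow> 4*m+1 \<ge> N0 \<longrightarrow>
         (\<exists>!l. eigenvalue (cap_mat s1 s2 m) l \<and> l \<in> {2/s2<..<2/s1}) \<and>
         (\<forall>l. eigenvalue (cap_mat s1 s2 m) l \<and> l \<in> {2/s2<..<2/s1} \<longrightarrow>
            \<bar>l - lambda_star s1 s2\<bar> < A * exp (- B * real (4*m+1)))) \<and>
      (\<forall>vb \<delta>::real. vb > 0 \<longrightarrow> \<delta> > 0 \<longrightarrow>
         (\<exists>A'>0. \<forall>m::nat. m \<ge> 1 \<longrightarrow> 4*m+1 \<ge> N0 \<longrightarrow>
            (\<forall>l. eigenvalue (cap_mat s1 s2 m) l \<and> l \<in> {2/s2<..<2/s1} \<longrightarrow>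
               \<bar>vb * sqrt (\<delta> * l) - vb * sqrt (\<delta> * lambda_star s1 s2)\<bar>
                 < A' * exp (- B * real (4*m+1))))))"
proof -
  let ?a = "1/s1" and ?b = "1/s2"
  have s1: "0 < s1" and s2: "0 < s2" using assms by auto
  have b0: "0 < ?b" using s2 by simp
  have ba: "?b < ?a" using assms by (simp add: frac_less2)
  have G: "l \<in> {2/s2<..<2/s1} \<longleftrightarrow> 2*?b < l \<and> l < 2*?a" for l by auto
  note lsb = lstar_bounds[OF b0 ba]
  have ls: "lambda_star s1 s2 = lstar ?a ?b" by (rule lambda_star_eq)
  have part1: "lambda_star s1 s2 \<in> {2/s2<..<2/s1}" unfolding G ls using lsb ba by simp
  have lspos: "0 < lambda_star s1 s2" unfolding ls using lsb(1) b0 by linarith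
  obtain M A B where M1: "1 \<le> M" and A0: "A > 0" and B0: "B > 0" and
    main: "\<And>m. M \<le> m \<Longrightarrow> (\<exists>!l. 2*?b < l \<and> l < 2*?a \<and> rho ?a ?b m l = LL ?a l) \<and>
      (\<forall>l. 2*?b < l \<and> l < 2*?a \<and> rho ?a ?b m l = LL ?a l \<longrightarrow> \<bar>l - lstar ?a ?b\<bar> < A * exp (- B * real (4*m+1)))"
    using analytic[OF b0 ba] by blast
  have EV: "eigenvalue (cap_mat s1 s2 m) l \<and> l \<in> {2/s2<..<2/s1} \<longleftrightarrow>
            2*?b < l \<and> l < 2*?a \<and> rho ?a ?b m l = LL ?a l" if "1 \<le> m" for m l
  proof (cases "l \<in> {2/s2<..<2/s1}")
    case True
    then have "2/s2 < l" "l < 2/s1" by auto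
    then show ?thesis using eig_iff[OF s1 assms(2) that] True G by blast
  next
    case False
    then show ?thesis using G by blast
  qed
  have P2: "(\<exists>!l. eigenvalue (cap_mat s1 s2 m) l \<and> l \<in> {2/s2<..<2/s1}) \<and>
         (\<forall>l. eigenvalue (cap_mat s1 s2 m) l \<and> l \<in> {2/s2<..<2/s1} \<longrightarrow>
            \<bar>l - lambda_star s1 s2\<bar> < A * exp (- B * real (4*m+1)))"
    if m: "1 \<le> m" "4*m+1 \<ge> 4*M+1" for m
  proof -
    have mM: "M \<le> m" using m by simp
    show ?thesis unfolding EV[OF m(1)] ls using main[OF mM] by blast
  qed
  have P3: "\<exists>A'>0. \<forall>m::nat. m \<ge> 1 \<longrightarrow> 4*m+1 \<ge> 4*M+1 \<longrightarrow>
            (\<forall>l. eigenvalue (cap_mat s1 s2 m) l \<and> l \<in> {2/s2<..<2/s1} \<longrightarrow>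
               \<bar>vb * sqrt (\<delta> * l) - vb * sqrt (\<delta> * lambda_star s1 s2)\<bar>
                 < A' * exp (- B * real (4*m+1)))"
    if vb: "vb > 0" and d: "\<delta> > 0" for vb \<delta>
  proof -
    let ?L = "lambda_star s1 s2"
    define A' where "A' = vb * sqrt \<delta> * A / sqrt ?L"
    have A'0: "A' > 0" unfolding A'_def using vb d A0 lspos by simp
    have "\<bar>vb * sqrt (\<delta> * l) - vb * sqrt (\<delta> * ?L)\<bar> < A' * exp (- B * real (4*m+1))"
      if m: "1 \<le> m" "4*m+1 \<ge> 4*M+1" and l: "eigenvalue (cap_mat s1 s2 m) l \<and> l \<in> {2/s2<..<2/s1}" for m l
    proof -
      have bnd: "\<bar>l - ?L\<bar> < A * exp (- B * real (4*m+1))" using P2[OF m] l by blast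
      have "2/s2 < l" using l by simp
      moreover have "0 < 2/s2" using s2 by simp
      ultimately have l0: "0 \<le> l" by linarith
      have "\<bar>vb * sqrt (\<delta> * l) - vb * sqrt (\<delta> * ?L)\<bar> = vb * sqrt \<delta> * \<bar>sqrt l - sqrt ?L\<bar>"
        using vb d by (simp add: real_sqrt_mult abs_mult right_diff_distrib[symmetric] mult.assoc)
      also have "\<dots> \<le> vb * sqrt \<delta> * (\<bar>l - ?L\<bar> / sqrt ?L)"
        using sqrt_diff_bound[OF l0 lspos] vb d by (intro mult_left_mono) auto
      also have "\<dots> < vb * sqrt \<delta> * (A * exp (- B * real (4*m+1)) / sqrt ?L)"
        using bnd vb d lspos by (intro mult_strict_left_mono divide_strict_right_mono) auto
      also have "\<dots> = A' * exp (- B * real (4*m+1))" unfolding A'_def by simp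
      finally show ?thesis .
    qed
    then show ?thesis using A'0 by blast
  qed
  show ?thesis
    apply (rule conjI[OF part1])
    apply (rule exI[of _ "4*M+1"])
    apply (rule exI[of _ A])
    apply (rule exI[of _ B])
    using A0 B0 P2 P3 by blast
qed


end
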